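(* For every co-comparability graph $G$, $\operatorname{tw}(G)\le 2\Delta(G)-1$, where $\Delta(G)$ is the maximum degree of $G$.
   Context: A comparability graph is a graph whose vertex set admits a partial order such that two distinct vertices are adjacent iff they are comparable. $G$ is a co-comparability graph if its complement is a comparability graph. The treewidth $\operatorname{tw}(G)$ is the minimum, over all tree decompositions $(\{X_i\},T)$ of $G$ (a tree $T$ with vertex subsets $X_i$ at its nodes covering all vertices and all edges, such that for each vertex the nodes containing it form a connected subtree), of $\max_i|X_i|-1$. *)

theory Defs
  imports Main
begin

definition simple_graph :: "'a set \<Rightarrow> ('a \<Rightarrow> 'a \<Rightarrow> bool) \<Rightarrow> bool" where
  "simple_graph V E \<longleftrightarrow> finite V \<and> (\<forall>u v. E u v \<longrightarrow> u \<in> V \<and> v \<in> V)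
     \<and> (\<forall>u v. E u v \<longrightarrow> E v u) \<and> (\<forall>v. \<not> E v v)"

definition comparability_graph :: "'a set \<Rightarrow> ('a \<Rightarrow> 'a \<Rightarrow> bool) \<Rightarrow> bool" where
  "comparability_graph V E \<longleftrightarrow> (\<exists>r. partial_order_on V r \<and>
     (\<forall>u\<in>V. \<forall>v\<in>V. u \<noteq> v \<longrightarrow> (E u v \<longleftrightarrow> (u, v) \<in> r \<or> (v, u) \<in> r)))"

definition complement_graph :: "'a set \<Rightarrow> ('a \<Rightarrow> 'a \<Rightarrow> bool) \<Rightarrow> ('a \<Rightarrow> 'a \<Rightarrow> bool)" where
  "complement_graph V E = (\<lambda>u v. u \<in> V \<and> v \<in> V \<and> u \<noteq> v \<and> \<not> E u v)"

definition cocomparability_graph :: "'a set \<Rightarrow> ('a \<Rightarrow> 'a \<Rightarrow> bool) \<Rightarrow> bool" where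
  "cocomparability_graph V E \<longleftrightarrow> comparability_graph V (complement_graph V E)"

definition max_degree :: "'a set \<Rightarrow> ('a \<Rightarrow> 'a \<Rightarrow> bool) \<Rightarrow> nat" where
  "max_degree V E = Max (insert 0 ((\<lambda>v. card {u \<in> V. E v u}) ` V))"

definition connected_in :: "'b set \<Rightarrow> ('b \<Rightarrow> 'b \<Rightarrow> bool) \<Rightarrow> bool" where
  "connected_in S F \<longleftrightarrow> (\<forall>i\<in>S. \<forall>j\<in>S. (\<lambda>a b. F a b \<and> a \<in> S \<and> b \<in> S)\<^sup>*\<^sup>* i j)"

definition is_tree :: "nat set \<Rightarrow> (nat \<Rightarrow> nat \<Rightarrow> bool) \<Rightarrow> bool" where
  "is_tree I F \<longleftrightarrow> I \<noteq> {} \<and> simple_graph I F \<and> connected_in I F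
     \<and> card {(i, j). i \<in> I \<and> j \<in> I \<and> F i j \<and> i < j} = card I - 1"

definition tree_decomposition ::
  "'a set \<Rightarrow> ('a \<Rightarrow> 'a \<Rightarrow> bool) \<Rightarrow> nat set \<Rightarrow> (nat \<Rightarrow> nat \<Rightarrow> bool) \<Rightarrow> (nat \<Rightarrow> 'a set) \<Rightarrow> bool" where
  "tree_decomposition V E I F X \<longleftrightarrow> is_tree I F
     \<and> (\<forall>i\<in>I. X i \<subseteq> V)
     \<and> (\<forall>v\<in>V. \<exists>i\<in>I. v \<in> X i)
     \<and> (\<forall>u v. E u v \<longrightarrow> (\<exists>i\<in>I. u \<in> X i \<and> v \<in> X i))
     \<and> (\<forall>v\<in>V. connected_in {i \<in> I. v \<in> X i} F)"

definition decomposition_width :: "nat set \<Rightarrow> (nat \<Rightarrow> 'a set) \<Rightarrow> nat" where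
  "decomposition_width I X = Max ((\<lambda>i. card (X i)) ` I) - 1"

definition treewidth :: "'a set \<Rightarrow> ('a \<Rightarrow> 'a \<Rightarrow> bool) \<Rightarrow> nat" where
  "treewidth V E = (LEAST w. \<exists>I F X. tree_decomposition V E I F X \<and> decomposition_width I X = w)"

end

theory Submission
  imports Defs
begin


lemma minimal_exists:
  assumes "finite S" "S \<noteq> {}" "trans r" "antisym r"
  shows "\<exists>m\<in>S. \<forall>y\<in>S. (y, m) \<in> r \<longrightarrow> y = m"
  using assms(1,2)
proof (induction S rule: finite_ne_induct)
  case (singleton x)
  then show ?case by auto
next
  case (insert x S)
  then obtain m where m: "m \<in> S" "\<forall>y\<in>S. (y, m) \<in> r \<longrightarrow> y = m" by auto
  show ?case
  proof (cases "(x, m) \<in> r \<and> x \<noteq> m")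
    case True
    have "\<forall>y\<in>insert x S. (y, x) \<in> r \<longrightarrow> y = x"
    proof (intro ballI impI)
      fix y assume y: "y \<in> insert x S" "(y, x) \<in> r"
      show "y = x"
      proof (rule ccontr)
        assume "y \<noteq> x"
        then have "y \<in> S" using y by auto
        moreover have "(y, m) \<in> r" using y True assms(3) by (meson transD)
        ultimately have "y = m" using m by auto
        then show False using y True assms(4) by (meson antisymD)
      qed
    qed
    then show ?thesis by auto
  next
    case False
    then show ?thesis using m by auto
  qed
qed

lemma linext:
  assumes "finite S" "trans r" "antisym r"
  shows "\<exists>xs. set xs = S \<and> distinct xs \<and> (\<forall>i j. i < j \<longrightarrow> j < length xs \<longrightarrow> (xs!j, xs!i) \<notin> r)"
  using assms(1)
proof (induction "card S" arbitrary: S)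
  case 0
  then have "S = {}" by simp
  then show ?case by (intro exI[of _ "[]"]) simp
next
  case (Suc n)
  then have ne: "S \<noteq> {}" by auto
  obtain m where m: "m \<in> S" "\<forall>y\<in>S. (y, m) \<in> r \<longrightarrow> y = m"
    using minimal_exists[OF Suc(3) ne assms(2,3)] by blast
  have cn: "n = card (S - {m})" using Suc(2) m Suc(3) by (simp add: card_Diff_singleton)
  have fn: "finite (S - {m})" using Suc(3) by blast
  obtain xs where xs: "set xs = S - {m}" "distinct xs"
    "\<forall>i j. i < j \<longrightarrow> j < length xs \<longrightarrow> (xs!j, xs!i) \<notin> r"
    using Suc(1)[OF cn fn] by blast
  show ?case
  proof (intro exI[of _ "m # xs"] conjI allI impI)
    show "set (m # xs) = S" using xs(1) m(1) by auto
    show "distinct (m # xs)" using xs(1,2) by simp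
    fix i j assume ij: "i < j" "j < length (m # xs)"
    then obtain j' where j': "j = Suc j'" by (cases j) auto
    show "((m # xs) ! j, (m # xs) ! i) \<notin> r"
    proof (cases i)
      case 0
      have "xs ! j' \<in> S - {m}" using xs(1) ij j' by (metis length_Cons not_less_eq nth_mem)
      then have "(xs ! j', m) \<notin> r" using m(2) by blast
      then show ?thesis using 0 j' by simp
    next
      case (Suc i')
      have "i' < j'" "j' < length xs" using ij j' Suc by auto
      then have "(xs!j', xs!i') \<notin> r" using xs(3) by blast
      then show ?thesis using j' Suc by simp
    qed
  qed
qed



definition PF :: "nat \<Rightarrow> nat \<Rightarrow> nat \<Rightarrow> bool" where
  "PF n i j \<longleftrightarrow> i < n \<and> j < n \<and> (j = Suc i \<or> i = Suc j)"

lemma path_up: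
  assumes "\<forall>c. a \<le> c \<and> c \<le> b \<longrightarrow> c \<in> S" "S \<subseteq> {..<n}" "a \<le> b"
  shows "(\<lambda>x y. PF n x y \<and> x \<in> S \<and> y \<in> S)\<^sup>*\<^sup>* a b"
  using assms
proof (induction b)
  case 0 then show ?case by auto
next
  case (Suc b)
  show ?case
  proof (cases "a = Suc b")
    case True then show ?thesis by auto
  next
    case False
    then have "a \<le> b" using Suc by auto
    then have "(\<lambda>x y. PF n x y \<and> x \<in> S \<and> y \<in> S)\<^sup>*\<^sup>* a b" using Suc by auto
    moreover have "b \<in> S" "Suc b \<in> S" using Suc(2) \<open>a \<le> b\<close> by auto
    ultimately show ?thesis using Suc(3) unfolding PF_def
      by (auto intro: rtranclp.rtrancl_into_rtrancl)
  qed
qed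

lemma path_down:
  assumes "\<forall>c. b \<le> c \<and> c \<le> a \<longrightarrow> c \<in> S" "S \<subseteq> {..<n}" "b \<le> a"
  shows "(\<lambda>x y. PF n x y \<and> x \<in> S \<and> y \<in> S)\<^sup>*\<^sup>* a b"
  using assms
proof (induction a)
  case 0 then show ?case by auto
next
  case (Suc a)
  show ?case
  proof (cases "b = Suc a")
    case True then show ?thesis by auto
  next
    case False
    then have "b \<le> a" using Suc by auto
    then have "(\<lambda>x y. PF n x y \<and> x \<in> S \<and> y \<in> S)\<^sup>*\<^sup>* a b" using Suc by auto
    moreover have "a \<in> S" "Suc a \<in> S" using Suc(2) \<open>b \<le> a\<close> by auto
    moreover have "PF n (Suc a) a" using \<open>Suc a \<in> S\<close> Suc(3) unfolding PF_def by auto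
    ultimately show ?thesis
      using converse_rtranclp_into_rtranclp[of "\<lambda>x y. PF n x y \<and> x \<in> S \<and> y \<in> S" "Suc a" a b] by blast
  qed
qed

lemma convex_connected:
  assumes "\<forall>a\<in>S. \<forall>b\<in>S. \<forall>c. a \<le> c \<and> c \<le> b \<longrightarrow> c \<in> S" "S \<subseteq> {..<n}"
  shows "connected_in S (PF n)"
  unfolding connected_in_def
proof (intro ballI)
  fix i j assume ij: "i \<in> S" "j \<in> S"
  show "(\<lambda>x y. PF n x y \<and> x \<in> S \<and> y \<in> S)\<^sup>*\<^sup>* i j"
  proof (cases "i \<le> j")
    case True then show ?thesis using path_up[OF _ assms(2) True] assms(1) ij by blast
  next
    case False
    then have "j \<le> i" by simp
    then show ?thesis using path_down[OF _ assms(2) \<open>j \<le> i\<close>] assms(1) ij by blast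
  qed
qed

lemma path_tree:
  assumes "n > 0"
  shows "is_tree {..<n} (PF n)"
proof -
  have "{(i, j). i \<in> {..<n} \<and> j \<in> {..<n} \<and> PF n i j \<and> i < j} = (\<lambda>i. (i, Suc i)) ` {..<n-1}"
    unfolding PF_def by auto
  moreover have "card ((\<lambda>i. (i, Suc i)) ` {..<n-1}) = n - 1"
    by (subst card_image) (auto simp: inj_on_def)
  moreover have "simple_graph {..<n} (PF n)" unfolding simple_graph_def PF_def by auto
  moreover have "connected_in {..<n} (PF n)" by (rule convex_connected) auto
  ultimately show ?thesis unfolding is_tree_def using assms by auto
qed



definition bag :: "'a list \<Rightarrow> ('a \<Rightarrow> 'a \<Rightarrow> bool) \<Rightarrow> nat \<Rightarrow> 'a set" where
  "bag xs E i = {xs!j | j. j \<le> i \<and> (j = i \<or> (\<exists>k. i \<le> k \<and> k < length xs \<and> E (xs!j) (xs!k)))}"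

lemma deg_le:
  assumes "simple_graph V E" "v \<in> V"
  shows "card {u \<in> V. E v u} \<le> max_degree V E"
proof -
  have "finite V" using assms unfolding simple_graph_def by auto
  then show ?thesis unfolding max_degree_def using assms(2)
    by (intro Max_ge) auto
qed

lemma bag_card:
  assumes sg: "simple_graph V E" and xs: "set xs = V" "distinct xs" and i: "i < length xs"
    and umb: "\<forall>i j k. i < j \<longrightarrow> j < k \<longrightarrow> k < length xs \<longrightarrow> E (xs!i) (xs!k) \<longrightarrow> E (xs!j) (xs!i) \<or> E (xs!j) (xs!k)"
  shows "card (bag xs E i) \<le> max 1 (2 * max_degree V E)"
proof -
  have sym: "\<And>u v. E u v \<Longrightarrow> E v u" using sg unfolding simple_graph_def by auto
  have fin: "finite V" using sg unfolding simple_graph_def by auto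
  define L where "L = {j. j < i \<and> (\<exists>k. i \<le> k \<and> k < length xs \<and> E (xs!j) (xs!k))}"
  show ?thesis
  proof (cases "L = {}")
    case True
    have "bag xs E i \<subseteq> {xs!i}"
    proof
      fix u assume "u \<in> bag xs E i"
      then obtain j where j: "u = xs!j" "j \<le> i"
        "j = i \<or> (\<exists>k. i \<le> k \<and> k < length xs \<and> E (xs!j) (xs!k))"
        unfolding bag_def by blast
      have "j = i"
      proof (rule ccontr)
        assume "j \<noteq> i"
        then have "j \<in> L" using j unfolding L_def by auto
        then show False using True by blast
      qed
      then show "u \<in> {xs!i}" using j by simp
    qed
    then have "card (bag xs E i) \<le> card {xs!i}" by (intro card_mono) auto
    then have "card (bag xs E i) \<le> 1" by simp
    then show ?thesis by auto
  next
    case False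
    have finL: "finite L" unfolding L_def by auto
    define a where "a = Min L"
    have aL: "a \<in> L" using Min_in[OF finL False] a_def by auto
    have amin: "\<And>j. j \<in> L \<Longrightarrow> a \<le> j" using finL a_def by auto
    obtain b where b: "i \<le> b" "b < length xs" "E (xs!a) (xs!b)" using aL L_def by auto
    have ai: "a < i" using aL L_def by auto
    have sub: "bag xs E i \<subseteq> {u \<in> V. E (xs!a) u} \<union> {u \<in> V. E (xs!b) u}"
    proof
      fix u assume "u \<in> bag xs E i"
      then obtain j where j: "u = xs!j" "j \<le> i"
        "j = i \<or> (\<exists>k. i \<le> k \<and> k < length xs \<and> E (xs!j) (xs!k))"
        unfolding bag_def by auto
      have uV: "u \<in> V" using j i xs by auto
      have "E (xs!a) u \<or> E (xs!b) u"
      proof (cases "j = i")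
        case True
        show ?thesis
        proof (cases "i = b")
          case True then show ?thesis using b j \<open>j = i\<close> by auto
        next
          case False
          then show ?thesis using umb[rule_format, of a i b] ai b j \<open>j = i\<close> sym by auto
        qed
      next
        case False
        then have "j \<in> L" using j L_def by auto
        then have "a \<le> j" using amin by auto
        show ?thesis
        proof (cases "a = j")
          case True then show ?thesis using b j sym by auto
        next
          case False
          then show ?thesis using umb[rule_format, of a j b] \<open>a \<le> j\<close> \<open>j \<in> L\<close> L_def b sym j by auto
        qed
      qed
      then show "u \<in> {u \<in> V. E (xs!a) u} \<union> {u \<in> V. E (xs!b) u}" using uV by auto
    qed
    have "card (bag xs E i) \<le> card ({u \<in> V. E (xs!a) u} \<union> {u \<in> V. E (xs!b) u})"
      by (rule card_mono) (use fin sub in auto)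
    also have "\<dots> \<le> card {u \<in> V. E (xs!a) u} + card {u \<in> V. E (xs!b) u}" by (rule card_Un_le)
    also have "\<dots> \<le> 2 * max_degree V E"
      using deg_le[OF sg, of "xs!a"] deg_le[OF sg, of "xs!b"] xs ai i b by auto
    finally show ?thesis by auto
  qed
qed



lemma main_dec:
  assumes sg: "simple_graph V E" and xs: "set xs = V" "distinct xs" "xs \<noteq> []"
    and umb: "\<forall>i j k. i < j \<longrightarrow> j < k \<longrightarrow> k < length xs \<longrightarrow> E (xs!i) (xs!k) \<longrightarrow> E (xs!j) (xs!i) \<or> E (xs!j) (xs!k)"
  shows "treewidth V E \<le> 2 * max_degree V E - 1"
proof -
  define n where "n = length xs"
  have n0: "n > 0" using xs n_def by auto
  have sym: "\<And>u v. E u v \<Longrightarrow> E v u" and EV: "\<And>u v. E u v \<Longrightarrow> u \<in> V \<and> v \<in> V"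
    using sg unfolding simple_graph_def by auto
  have mem: "xs!j \<in> bag xs E i \<longleftrightarrow> j \<le> i \<and> (j = i \<or> (\<exists>k. i \<le> k \<and> k < n \<and> E (xs!j) (xs!k)))"
    if "j < n" "i < n" for i j
  proof
    assume "xs!j \<in> bag xs E i"
    then obtain j' where j': "xs!j = xs!j'" "j' \<le> i" "j' = i \<or> (\<exists>k. i \<le> k \<and> k < length xs \<and> E (xs!j') (xs!k))"
      unfolding bag_def by auto
    have "j' < n" using j' that by auto
    then have "j = j'" using j'(1) that xs(2) n_def nth_eq_iff_index_eq by metis
    then show "j \<le> i \<and> (j = i \<or> (\<exists>k. i \<le> k \<and> k < n \<and> E (xs!j) (xs!k)))" using j' n_def by auto
  next
    assume "j \<le> i \<and> (j = i \<or> (\<exists>k. i \<le> k \<and> k < n \<and> E (xs!j) (xs!k)))"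
    then show "xs!j \<in> bag xs E i" unfolding bag_def n_def by auto
  qed
  have td: "tree_decomposition V E {..<n} (PF n) (bag xs E)"
    unfolding tree_decomposition_def
  proof (intro conjI ballI allI impI)
    show "is_tree {..<n} (PF n)" using path_tree n0 by auto
  next
    fix i assume "i \<in> {..<n}"
    then show "bag xs E i \<subseteq> V" unfolding bag_def using xs n_def by auto
  next
    fix v assume "v \<in> V"
    then obtain j where j: "j < n" "v = xs!j" using xs n_def by (metis in_set_conv_nth)
    then show "\<exists>i\<in>{..<n}. v \<in> bag xs E i" using mem[of j j] by auto
  next
    fix u v assume e: "E u v"
    then obtain a b where ab: "a < n" "b < n" "u = xs!a" "v = xs!b" using EV xs n_def
      by (metis in_set_conv_nth)
    have "a \<noteq> b" using e ab sg unfolding simple_graph_def by auto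
    then show "\<exists>i\<in>{..<n}. u \<in> bag xs E i \<and> v \<in> bag xs E i"
    proof (cases "a < b")
      case True then show ?thesis using mem[of a b] mem[of b b] ab e by auto
    next
      case False then show ?thesis using mem[of a a] mem[of b a] ab e sym \<open>a \<noteq> b\<close> by auto
    qed
  next
    fix v assume "v \<in> V"
    then obtain j where j: "j < n" "v = xs!j" using xs n_def by (metis in_set_conv_nth)
    show "connected_in {i \<in> {..<n}. v \<in> bag xs E i} (PF n)"
    proof (rule convex_connected)
      show "{i \<in> {..<n}. v \<in> bag xs E i} \<subseteq> {..<n}" by auto
      show "\<forall>a\<in>{i \<in> {..<n}. v \<in> bag xs E i}. \<forall>b\<in>{i \<in> {..<n}. v \<in> bag xs E i}. \<forall>c. a \<le> c \<and> c \<le> b \<longrightarrow> c \<in> {i \<in> {..<n}. v \<in> bag xs E i}"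
      proof (intro ballI allI impI)
        fix a b c assume a: "a \<in> {i \<in> {..<n}. v \<in> bag xs E i}" and b: "b \<in> {i \<in> {..<n}. v \<in> bag xs E i}"
          and c: "a \<le> c \<and> c \<le> b"
        have ma: "j \<le> a" using a mem[OF j(1), of a] j by auto
        have mb: "j \<le> b \<and> (j = b \<or> (\<exists>k. b \<le> k \<and> k < n \<and> E (xs!j) (xs!k)))"
          using b mem[OF j(1), of b] j by auto
        have "j \<le> c \<and> (j = c \<or> (\<exists>k. c \<le> k \<and> k < n \<and> E (xs!j) (xs!k)))"
          using ma mb c by (metis le_trans order.antisym)
        then show "c \<in> {i \<in> {..<n}. v \<in> bag xs E i}" using mem[OF j(1), of c] j c b by auto
      qed
    qed
  qed
  have "decomposition_width {..<n} (bag xs E) \<le> 2 * max_degree V E - 1"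
  proof -
    have "Max ((\<lambda>i. card (bag xs E i)) ` {..<n}) \<le> max 1 (2 * max_degree V E)"
      using n0 bag_card[OF sg xs(1,2) _ umb] n_def by (subst Max_le_iff) auto
    then show ?thesis unfolding decomposition_width_def by auto
  qed
  moreover have "treewidth V E \<le> decomposition_width {..<n} (bag xs E)"
    unfolding treewidth_def by (rule Least_le) (use td in blast)
  ultimately show ?thesis by linarith
qed



theorem lemma13:
  fixes V :: "'a set" and E :: "'a \<Rightarrow> 'a \<Rightarrow> bool"
  assumes "simple_graph V E"
    and "cocomparability_graph V E"
  shows "treewidth V E \<le> 2 * max_degree V E - 1"
proof -
  obtain r where r: "partial_order_on V r"
    "\<forall>u\<in>V. \<forall>v\<in>V. u \<noteq> v \<longrightarrow> (complement_graph V E u v \<longleftrightarrow> (u, v) \<in> r \<or> (v, u) \<in> r)"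
    using assms(2) unfolding cocomparability_graph_def comparability_graph_def by blast
  have rc: "\<And>u v. u \<in> V \<Longrightarrow> v \<in> V \<Longrightarrow> u \<noteq> v \<Longrightarrow> (\<not> E u v \<longleftrightarrow> (u, v) \<in> r \<or> (v, u) \<in> r)"
    using r(2) unfolding complement_graph_def by auto
  have tr: "trans r" and an: "antisym r" using r(1) partial_order_onD by auto
  have fin: "finite V" using assms(1) unfolding simple_graph_def by auto
  obtain xs where xs: "set xs = V" "distinct xs"
    "\<forall>i j. i < j \<longrightarrow> j < length xs \<longrightarrow> (xs!j, xs!i) \<notin> r"
    using linext[OF fin tr an] by blast
  show ?thesis
  proof (cases "xs = []")
    case True
    then have V0: "V = {}" using xs by auto
    have "tree_decomposition V E {0} (\<lambda>_ _. False) (\<lambda>_. {})"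
      unfolding tree_decomposition_def is_tree_def simple_graph_def connected_in_def
      using V0 assms(1) unfolding simple_graph_def by auto
    then have "treewidth V E \<le> decomposition_width {0::nat} (\<lambda>_. {} :: 'a set)"
      unfolding treewidth_def by (intro Least_le) blast
    then show ?thesis unfolding decomposition_width_def by auto
  next
    case False
    have umb: "\<forall>i j k. i < j \<longrightarrow> j < k \<longrightarrow> k < length xs \<longrightarrow> E (xs!i) (xs!k) \<longrightarrow> E (xs!j) (xs!i) \<or> E (xs!j) (xs!k)"
    proof (intro allI impI)
      fix i j k assume ijk: "i < j" "j < k" "k < length xs" "E (xs!i) (xs!k)"
      show "E (xs!j) (xs!i) \<or> E (xs!j) (xs!k)"
      proof (rule ccontr)
        assume c: "\<not> (E (xs!j) (xs!i) \<or> E (xs!j) (xs!k))"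
        have inV: "xs!i \<in> V" "xs!j \<in> V" "xs!k \<in> V" using xs(1) ijk by auto
        have d1: "xs!j \<noteq> xs!i" "xs!j \<noteq> xs!k" "xs!i \<noteq> xs!k"
          using xs(2) ijk by (auto simp: nth_eq_iff_index_eq)
        have "(xs!i, xs!j) \<in> r" using rc[OF inV(2,1) d1(1)] c xs(3) ijk by auto
        moreover have "(xs!j, xs!k) \<in> r" using rc[OF inV(2,3) d1(2)] c xs(3) ijk by auto
        ultimately have "(xs!i, xs!k) \<in> r" using tr by (meson transD)
        then show False using rc[OF inV(1,3) d1(3)] ijk by auto
      qed
    qed
    show ?thesis by (rule main_dec[OF assms(1) xs(1,2) False umb])
  qed
qed

end
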